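(* Consider a finite-state Markov chain on a set $Q$ of states with $|Q|=n\ge1$, and let $y_{\min}$ be its smallest nonzero transition probability. Let $p\in Q$ and $S\subseteq Q$, and on runs starting in $p$ let $T$ be the number of steps after which the run first visits a state of $S$ ($T$ undefined if the run never visits $S$). Then for all $k\ge n$, $\mathcal{P}(T\text{ is defined and }T\ge k)\le 2c^k$, where $c=\exp(-y_{\min}^n/n)$. Moreover, if $\mathcal{P}(T\text{ is defined})=1$, then $\mathbb{E}T\le 5n/y_{\min}^n$.
   Context: Standard finite-state discrete-time Markov chain; $\mathcal{P}$ and $\mathbb{E}$ are probability and expectation over runs starting in $p$. *)

theory Defs
  imports "HOL-Probability.Probability"
begin

text \<open>A finite-state Markov chain on the finite type 'a with transition kernel K.
  The run starting in p is p = x0, x1, x2, ...; a finite run prefix is p # xs.\<close>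

definition path_prob :: "('a \<Rightarrow> 'a pmf) \<Rightarrow> 'a \<Rightarrow> 'a list \<Rightarrow> real" where
  "path_prob K p xs = (\<Prod>i<length xs. pmf (K ((p # xs) ! i)) ((p # xs) ! Suc i))"

text \<open>Probability that the first visit of S (counting steps from time 0) happens at step j,
  i.e. P(T = j).\<close>
definition hit_time_prob :: "('a::finite \<Rightarrow> 'a pmf) \<Rightarrow> 'a set \<Rightarrow> 'a \<Rightarrow> nat \<Rightarrow> real" where
  "hit_time_prob K S p j =
     (\<Sum>xs \<in> {xs. length xs = j \<and> (\<forall>i<j. (p # xs) ! i \<notin> S) \<and> (p # xs) ! j \<in> S}.
        path_prob K p xs)"

definition y_min :: "('a::finite \<Rightarrow> 'a pmf) \<Rightarrow> real" where
  "y_min K = Min {pmf (K x) y | x y. pmf (K x) y > 0}"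

end

theory Submission imports Defs begin

fun hh :: "('a::finite \<Rightarrow> 'a pmf) \<Rightarrow> 'a set \<Rightarrow> nat \<Rightarrow> 'a \<Rightarrow> real" where
  "hh K S 0 x = (if x \<in> S then 1 else 0)"
| "hh K S (Suc j) x = (if x \<in> S then 0 else (\<Sum>y\<in>UNIV. pmf (K x) y * hh K S j y))"

definition RR :: "('a::finite \<Rightarrow> 'a pmf) \<Rightarrow> 'a set \<Rightarrow> 'a set" where
  "RR K S = {x. \<exists>j. hh K S j x \<noteq> 0}"

fun aa :: "('a::finite \<Rightarrow> 'a pmf) \<Rightarrow> 'a set \<Rightarrow> nat \<Rightarrow> 'a \<Rightarrow> real" where
  "aa K S 0 x = (if x \<in> RR K S then 1 else 0)"
| "aa K S (Suc j) x = (if x \<in> S then 0 else (\<Sum>y\<in>UNIV. pmf (K x) y * aa K S j y))"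

fun nv :: "('a::finite \<Rightarrow> 'a pmf) \<Rightarrow> 'a set \<Rightarrow> nat \<Rightarrow> 'a \<Rightarrow> real" where
  "nv K S 0 x = 1"
| "nv K S (Suc j) x = (if x \<in> S then 0 else (\<Sum>y\<in>UNIV. pmf (K x) y * nv K S j y))"

lemma sumK: "(\<Sum>y\<in>UNIV. pmf (K x) (y::'a::finite)) = 1"
  by (rule sum_pmf_eq_1) auto

lemma ymin_facts:
  fixes K :: "'a::finite \<Rightarrow> 'a pmf"
  shows "y_min K > 0" "y_min K \<le> 1" "pmf (K x) z > 0 \<Longrightarrow> y_min K \<le> pmf (K x) z"
proof -
  let ?A = "{pmf (K x) y | x y. pmf (K x) y > 0}"
  have fin: "finite ?A"
    by (rule finite_subset[of _ "(\<lambda>(x,y). pmf (K x) y) ` UNIV"]) auto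
  obtain z0 where "z0 \<in> set_pmf (K x)" using set_pmf_not_empty[of "K x"] by auto
  then have "pmf (K x) z0 > 0" by (simp add: pmf_positive)
  then have ne: "pmf (K x) z0 \<in> ?A" by blast
  then have "?A \<noteq> {}" by blast
  have "Min ?A \<in> ?A" using fin \<open>?A \<noteq> {}\<close> by (rule Min_in)
  then show "y_min K > 0" "y_min K \<le> 1" unfolding y_min_def using pmf_le_1 by auto
  show "pmf (K x) z > 0 \<Longrightarrow> y_min K \<le> pmf (K x) z"
    unfolding y_min_def by (rule Min_le[OF fin]) auto
qed

lemma hh_nonneg: "0 \<le> hh K S j x"
  by (induction j arbitrary: x) (auto intro!: sum_nonneg)

lemma aa_nonneg: "0 \<le> aa K S j x"
  by (induction j arbitrary: x) (auto intro!: sum_nonneg)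

lemma hh_sum_le1: "(\<Sum>j<N. hh K S j x) \<le> 1"
proof (induction N arbitrary: x)
  case 0 then show ?case by simp
next
  case (Suc N)
  show ?case
  proof (cases "x \<in> S")
    case True then show ?thesis by (simp only: sum.lessThan_Suc_shift) simp
  next
    case False
    have "(\<Sum>j<Suc N. hh K S j x) = (\<Sum>j<N. \<Sum>y\<in>UNIV. pmf (K x) y * hh K S j y)"
      using False by (simp only: sum.lessThan_Suc_shift) simp
    also have "\<dots> = (\<Sum>y\<in>UNIV. pmf (K x) y * (\<Sum>j<N. hh K S j y))"
      by (simp add: sum_distrib_left sum.swap[of _ "{..<N}"])
    also have "\<dots> \<le> (\<Sum>y\<in>UNIV. pmf (K x) y * 1)"
      by (intro sum_mono mult_left_mono Suc) auto
    also have "\<dots> = 1" using sumK by simp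
    finally show ?thesis .
  qed
qed

lemma nv_eq: "nv K S m x = 1 - (\<Sum>j<m. hh K S j x)"
proof (induction m arbitrary: x)
  case 0 then show ?case by simp
next
  case (Suc m)
  show ?case
  proof (cases "x \<in> S")
    case True then show ?thesis by (simp only: sum.lessThan_Suc_shift) simp
  next
    case False
    have "nv K S (Suc m) x = (\<Sum>y\<in>UNIV. pmf (K x) y * (1 - (\<Sum>j<m. hh K S j y)))"
      using False Suc by simp
    also have "\<dots> = (\<Sum>y\<in>UNIV. pmf (K x) y) - (\<Sum>y\<in>UNIV. pmf (K x) y * (\<Sum>j<m. hh K S j y))"
      by (simp add: right_diff_distrib sum_subtractf)
    also have "\<dots> = 1 - (\<Sum>j<m. \<Sum>y\<in>UNIV. pmf (K x) y * hh K S j y)"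
      using sumK by (simp add: sum_distrib_left sum.swap[of _ "{..<m}"])
    also have "\<dots> = 1 - (\<Sum>j<Suc m. hh K S j x)"
      using False by (simp only: sum.lessThan_Suc_shift) simp
    finally show ?thesis .
  qed
qed

lemma aa_le_nv: "aa K S k x \<le> nv K S k x"
  by (induction k arbitrary: x) (auto intro!: sum_mono mult_left_mono)

lemma nv_le1: "nv K S k x \<le> 1"
  using nv_eq[of K S k x] by (simp add: sum_nonneg hh_nonneg)

lemma hh_step: "x \<notin> S \<Longrightarrow> pmf (K x) z * hh K S i z \<le> hh K S (Suc i) x"
  by (simp, rule member_le_sum) (auto simp: hh_nonneg)

lemma hh_pos_step:
  assumes "hh K S (Suc i) x > 0"
  shows "x \<notin> S \<and> (\<exists>z. pmf (K x) z > 0 \<and> hh K S i z > 0)"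
proof -
  have xS: "x \<notin> S" using assms by (auto split: if_splits)
  have "\<exists>z. pmf (K x) z * hh K S i z > 0"
  proof (rule ccontr)
    assume "\<not> ?thesis"
    then have "(\<Sum>y\<in>UNIV. pmf (K x) y * hh K S i y) \<le> 0"
      by (intro sum_nonpos) (auto simp: not_less)
    then show False using assms xS by simp
  qed
  then obtain z where "pmf (K x) z * hh K S i z > 0" by blast
  then have "pmf (K x) z > 0 \<and> hh K S i z > 0"
    using hh_nonneg[of K S i z] pmf_nonneg[of "K x" z] by (auto simp: zero_less_mult_iff)
  then show ?thesis using xS by blast
qed

lemma notR_step:
  assumes "x \<notin> RR K S" "pmf (K x) z > 0" shows "z \<notin> RR K S"
proof
  assume "z \<in> RR K S"
  then obtain j where "hh K S j z \<noteq> 0" unfolding RR_def by blast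
  then have hz: "hh K S j z > 0" using hh_nonneg[of K S j z] by linarith
  have xS: "x \<notin> S"
  proof
    assume "x \<in> S" then have "hh K S 0 x \<noteq> 0" by simp
    then show False using assms(1) unfolding RR_def by blast
  qed
  have "0 < pmf (K x) z * hh K S j z" using hz assms(2) by simp
  also have "\<dots> \<le> hh K S (Suc j) x" by (rule hh_step[OF xS])
  finally have "hh K S (Suc j) x \<noteq> 0" by simp
  then show False using assms(1) unfolding RR_def by blast
qed

lemma aa_notR: "x \<notin> RR K S \<Longrightarrow> aa K S k x = 0"
proof (induction k arbitrary: x)
  case 0 then show ?case by simp
next
  case (Suc k)
  have "\<And>y. pmf (K x) y * aa K S k y = 0"
  proof -
    fix y show "pmf (K x) y * aa K S k y = 0"
    proof (cases "pmf (K x) y > 0")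
      case True then show ?thesis using Suc notR_step[OF Suc.prems True] by simp
    next
      case False then have "pmf (K x) y = 0" using pmf_nonneg[of "K x" y] by linarith
      then show ?thesis by simp
    qed
  qed
  then show ?case by (auto intro!: sum.neutral)
qed

lemma aa_tail: "(\<Sum>j<N. hh K S (k+j) x) \<le> aa K S k x"
proof (induction k arbitrary: x N)
  case 0
  show ?case
  proof (cases "x \<in> RR K S")
    case True then show ?thesis using hh_sum_le1[where N=N and K=K and S=S and x=x] by simp
  next
    case False then have "\<And>j. hh K S j x = 0" unfolding RR_def by blast
    then show ?thesis using False by simp
  qed
next
  case (Suc k)
  show ?case
  proof (cases "x \<in> S")
    case True then show ?thesis by simp
  next
    case False
    have "(\<Sum>j<N. hh K S (Suc k+j) x) = (\<Sum>j<N. \<Sum>y\<in>UNIV. pmf (K x) y * hh K S (k+j) y)"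
      using False by simp
    also have "\<dots> = (\<Sum>y\<in>UNIV. pmf (K x) y * (\<Sum>j<N. hh K S (k+j) y))"
      by (simp add: sum_distrib_left sum.swap[of _ "{..<N}"])
    also have "\<dots> \<le> (\<Sum>y\<in>UNIV. pmf (K x) y * aa K S k y)"
      by (intro sum_mono mult_left_mono Suc) auto
    also have "\<dots> = aa K S (Suc k) x" using False by simp
    finally show ?thesis .
  qed
qed

lemma aa_mult:
  assumes "\<And>y. aa K S k y \<le> B" "0 \<le> B"
  shows "aa K S (m+k) x \<le> B * aa K S m x"
proof (induction m arbitrary: x)
  case 0
  show ?case using assms aa_notR[of x K S k] by auto
next
  case (Suc m)
  show ?case
  proof (cases "x \<in> S")
    case True then show ?thesis by simp
  next
    case False
    have "aa K S (Suc m + k) x = (\<Sum>y\<in>UNIV. pmf (K x) y * aa K S (m+k) y)" using False by simp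
    also have "\<dots> \<le> (\<Sum>y\<in>UNIV. pmf (K x) y * (B * aa K S m y))"
      by (intro sum_mono mult_left_mono Suc) auto
    also have "\<dots> = B * aa K S (Suc m) x" using False
      by (simp add: sum_distrib_left algebra_simps)
    finally show ?thesis .
  qed
qed

definition EE :: "('a::finite \<Rightarrow> 'a pmf) \<Rightarrow> 'a set \<Rightarrow> nat \<Rightarrow> 'a set" where
  "EE K S i = {x. \<exists>i'\<le>i. hh K S i' x \<ge> y_min K ^ i'}"

lemma EE_mono: "i \<le> i' \<Longrightarrow> EE K S i \<subseteq> EE K S i'"
  unfolding EE_def using le_trans by blast

lemma hh_pos_EE: "hh K S j x > 0 \<Longrightarrow> x \<in> EE K S j"
proof (induction j arbitrary: x)
  case 0 then show ?case by (auto simp: EE_def split: if_splits)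
next
  case (Suc j)
  from hh_pos_step[OF Suc.prems] obtain z where xS: "x \<notin> S" and z: "pmf (K x) z > 0" "hh K S j z > 0"
    by blast
  from Suc.IH[OF z(2)] obtain i' where i': "i' \<le> j" "hh K S i' z \<ge> y_min K ^ i'"
    unfolding EE_def by blast
  have "y_min K ^ Suc i' = y_min K * y_min K ^ i'" by simp
  also have "\<dots> \<le> pmf (K x) z * hh K S i' z"
    using ymin_facts(1)[of K] ymin_facts(3)[where K=K and x=x and z=z, OF z(1)] i'(2)
    by (intro mult_mono) auto
  also have "\<dots> \<le> hh K S (Suc i') x" by (rule hh_step[OF xS])
  finally show ?case using i'(1) unfolding EE_def by (intro CollectI exI[of _ "Suc i'"]) auto
qed

lemma EE_stable:
  assumes "EE K S (Suc i) = EE K S i"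
  shows "EE K S (Suc (Suc i)) = EE K S (Suc i)"
proof
  show "EE K S (Suc i) \<subseteq> EE K S (Suc (Suc i))" by (rule EE_mono) simp
  show "EE K S (Suc (Suc i)) \<subseteq> EE K S (Suc i)"
  proof
    fix x assume "x \<in> EE K S (Suc (Suc i))"
    then obtain i' where i': "i' \<le> Suc (Suc i)" "hh K S i' x \<ge> y_min K ^ i'"
      unfolding EE_def by blast
    show "x \<in> EE K S (Suc i)"
    proof (cases "i' \<le> Suc i")
      case True then show ?thesis using i' unfolding EE_def by blast
    next
      case False
      then have ii: "i' = Suc (Suc i)" using i' by simp
      have "hh K S (Suc (Suc i)) x > 0"
        using i' ii ymin_facts(1)[of K] by (metis order_less_le_trans zero_less_power)
      from hh_pos_step[OF this] obtain z where xS: "x \<notin> S" and z: "pmf (K x) z > 0" "hh K S (Suc i) z > 0"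
        by blast
      have "z \<in> EE K S i" using hh_pos_EE[OF z(2)] assms by simp
      then obtain i'' where i'': "i'' \<le> i" "hh K S i'' z \<ge> y_min K ^ i''"
        unfolding EE_def by blast
      have "y_min K ^ Suc i'' = y_min K * y_min K ^ i''" by simp
      also have "\<dots> \<le> pmf (K x) z * hh K S i'' z"
        using ymin_facts(1)[of K] ymin_facts(3)[where K=K and x=x and z=z, OF z(1)] i''(2)
        by (intro mult_mono) auto
      also have "\<dots> \<le> hh K S (Suc i'') x" by (rule hh_step[OF xS])
      finally show ?thesis using i''(1) unfolding EE_def by (intro CollectI exI[of _ "Suc i''"]) auto
    qed
  qed
qed

lemma EE_stable_all:
  assumes "EE K S (Suc i) = EE K S i" "i \<le> j"
  shows "EE K S j = EE K S i"
  using assms(2)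
proof (induction j rule: dec_induct)
  case base then show ?case by simp
next
  case (step j)
  show ?case
  proof (cases "j = i")
    case True then show ?thesis using assms(1) by simp
  next
    case False
    then obtain j' where j: "j = Suc j'" "i \<le> j'" using step(1) by (cases j) auto
    have "EE K S (Suc j') = EE K S j'"
      using step.IH j EE_mono[of i j' K S] EE_mono[of j' "Suc j'" K S] by auto
    then show ?thesis using EE_stable[of K S j'] step.IH j by simp
  qed
qed

lemma EE_exists_stable:
  fixes K :: "'a::finite \<Rightarrow> 'a pmf"
  assumes "S \<noteq> {}"
  shows "\<exists>i<CARD('a). EE K S (Suc i) = EE K S i"
proof (rule ccontr)
  assume "\<not> ?thesis"
  then have ne: "\<And>i. i < CARD('a) \<Longrightarrow> EE K S i \<subset> EE K S (Suc i)"
    using EE_mono[of _ "Suc _" K S] by (metis le_SucI order.refl psubsetI)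
  have "i \<le> CARD('a) \<Longrightarrow> card (EE K S i) \<ge> Suc i" for i
  proof (induction i)
    case 0
    obtain s where "s \<in> S" using assms by blast
    then have "s \<in> EE K S 0" unfolding EE_def by auto
    then show ?case using card_gt_0_iff[of "EE K S 0"] by (auto simp: Suc_le_eq)
  next
    case (Suc i)
    have "card (EE K S i) < card (EE K S (Suc i))"
      using ne[of i] Suc.prems by (intro psubset_card_mono) auto
    then show ?case using Suc by simp
  qed
  then have "card (EE K S CARD('a)) \<ge> Suc CARD('a)" by simp
  moreover have "card (EE K S CARD('a)) \<le> CARD('a)" by (rule card_mono) auto
  ultimately show False by simp
qed

lemma aa_n_bound:
  fixes K :: "'a::finite \<Rightarrow> 'a pmf"
  shows "aa K S CARD('a) x \<le> 1 - y_min K ^ CARD('a)"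
proof (cases "x \<in> RR K S")
  case False
  have "y_min K ^ CARD('a) \<le> 1" using ymin_facts(1,2)[of K] by (simp add: power_le_one)
  then show ?thesis using aa_notR[OF False] by simp
next
  case True
  let ?n = "CARD('a)"
  have n1: "?n \<ge> 1" by (simp add: Suc_leI)
  from True obtain j where "hh K S j x \<noteq> 0" unfolding RR_def by blast
  then have hj: "hh K S j x > 0" using hh_nonneg[of K S j x] by linarith
  have "S \<noteq> {}"
  proof
    assume "S = {}" then have "hh K S j' x = 0" for j' by (induction j' arbitrary: x) auto
    then show False using hj by simp
  qed
  from EE_exists_stable[OF this, of K] obtain i where i: "i < ?n" "EE K S (Suc i) = EE K S i" by blast
  have "x \<in> EE K S (?n - 1)"
  proof (cases "j \<le> ?n - 1")
    case True then show ?thesis using hh_pos_EE[OF hj] EE_mono[OF True] by blast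
  next
    case False
    then have "i \<le> j" using i(1) by simp
    then have "EE K S j = EE K S i" by (rule EE_stable_all[OF i(2)])
    moreover have "EE K S i \<subseteq> EE K S (?n - 1)" using i(1) by (intro EE_mono) simp
    ultimately show ?thesis using hh_pos_EE[OF hj] by blast
  qed
  then obtain i' where i': "i' \<le> ?n - 1" "hh K S i' x \<ge> y_min K ^ i'" unfolding EE_def by blast
  have "i' < ?n" using i'(1) n1 by linarith
  have "y_min K ^ ?n \<le> y_min K ^ i'"
    using ymin_facts(1,2)[of K] i'(1) n1 by (intro power_decreasing) auto
  also have "\<dots> \<le> hh K S i' x" by (rule i'(2))
  also have "\<dots> \<le> (\<Sum>j<?n. hh K S j x)"
    using \<open>i' < ?n\<close> by (intro member_le_sum) (auto simp: hh_nonneg)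
  finally have "y_min K ^ ?n \<le> (\<Sum>j<?n. hh K S j x)" .
  then show ?thesis using aa_le_nv[of K S ?n x] nv_eq[of K S ?n x] by linarith
qed

lemma aa_pow:
  fixes K :: "'a::finite \<Rightarrow> 'a pmf"
  shows "aa K S (CARD('a) * q + r) x \<le> (1 - y_min K ^ CARD('a)) ^ q"
proof (induction q arbitrary: x)
  case 0 then show ?case using aa_le_nv[of K S r x] nv_le1[of K S r x] by simp
next
  case (Suc q)
  let ?n = "CARD('a)" and ?b = "y_min K ^ CARD('a)"
  have b1: "?b \<le> 1" using ymin_facts(1,2)[of K] by (simp add: power_le_one)
  have "aa K S (?n * Suc q + r) x = aa K S (?n + (?n * q + r)) x" by (simp add: algebra_simps)
  also have "\<dots> \<le> (1 - ?b) ^ q * aa K S ?n x"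
    using b1 by (intro aa_mult Suc.IH) auto
  also have "\<dots> \<le> (1 - ?b) ^ q * (1 - ?b)"
    using b1 by (intro mult_left_mono aa_n_bound) auto
  finally show ?case by (simp add: mult.commute)
qed

lemma aa_div:
  fixes K :: "'a::finite \<Rightarrow> 'a pmf"
  shows "aa K S k x \<le> (1 - y_min K ^ CARD('a)) ^ (k div CARD('a))"
  using aa_pow[of K S "k div CARD('a)" "k mod CARD('a)" x] by simp

lemma path_prob_Cons: "path_prob K x (y#ys) = pmf (K x) y * path_prob K y ys"
  unfolding path_prob_def by (simp only: length_Cons prod.lessThan_Suc_shift) simp

definition LL :: "'a set \<Rightarrow> nat \<Rightarrow> 'a \<Rightarrow> 'a list set" where
  "LL S j x = {xs. length xs = j \<and> (\<forall>i<j. (x # xs) ! i \<notin> S) \<and> (x # xs) ! j \<in> S}"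

lemma LL_fin: "finite (LL S j (x::'a::finite))"
proof -
  have "finite {xs. set xs \<subseteq> (UNIV::'a set) \<and> length xs = j}" by (rule finite_lists_length_eq) simp
  then show ?thesis by (rule finite_subset[rotated]) (auto simp: LL_def)
qed

lemma LL_Suc_S: "x \<in> S \<Longrightarrow> LL S (Suc j) x = {}"
  unfolding LL_def by force

lemma LL_Suc: "x \<notin> S \<Longrightarrow> LL S (Suc j) x = (\<lambda>(y,ys). y#ys) ` (SIGMA y:UNIV. LL S j y)"
proof safe
  fix xs assume "x \<notin> S" "xs \<in> LL S (Suc j) x"
  then obtain y ys where xs: "xs = y # ys" unfolding LL_def by (cases xs) auto
  have "ys \<in> LL S j y" using \<open>xs \<in> LL S (Suc j) x\<close> unfolding LL_def xs
    by (auto simp: All_less_Suc2)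
  then show "xs \<in> (\<lambda>(y,ys). y#ys) ` (SIGMA y:UNIV. LL S j y)" using xs by force
next
  fix y ys assume "x \<notin> S" "ys \<in> LL S j y"
  then show "y # ys \<in> LL S (Suc j) x" unfolding LL_def by (auto simp: All_less_Suc2)
qed

lemma hit_eq: "hit_time_prob K S x j = hh K S j x"
proof (induction j arbitrary: x)
  case 0
  have "LL S 0 x = (if x \<in> S then {[]} else {})" unfolding LL_def by auto
  then show ?case unfolding hit_time_prob_def LL_def[symmetric] by (simp add: path_prob_def)
next
  case (Suc j)
  show ?case
  proof (cases "x \<in> S")
    case True then show ?thesis unfolding hit_time_prob_def LL_def[symmetric] by (simp add: LL_Suc_S)
  next
    case False
    have inj: "inj_on (\<lambda>(y,ys). y#ys) (SIGMA y:UNIV. LL S j y)" by (auto simp: inj_on_def)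
    have "hit_time_prob K S x (Suc j) = (\<Sum>xs\<in>LL S (Suc j) x. path_prob K x xs)"
      unfolding hit_time_prob_def LL_def ..
    also have "\<dots> = (\<Sum>p\<in>(SIGMA y:UNIV. LL S j y). path_prob K x (fst p # snd p))"
      unfolding LL_Suc[OF False] by (subst sum.reindex[OF inj]) (simp add: case_prod_beta)
    also have "\<dots> = (\<Sum>(y,ys)\<in>(SIGMA y:UNIV. LL S j y). pmf (K x) y * path_prob K y ys)"
      by (simp add: path_prob_Cons case_prod_beta)
    also have "\<dots> = (\<Sum>y\<in>UNIV. \<Sum>ys\<in>LL S j y. pmf (K x) y * path_prob K y ys)"
      by (rule sum.Sigma[symmetric]) (auto simp: LL_fin)
    also have "\<dots> = (\<Sum>y\<in>UNIV. pmf (K x) y * hit_time_prob K S y j)"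
      unfolding hit_time_prob_def LL_def[symmetric] by (simp add: sum_distrib_left)
    also have "\<dots> = hh K S (Suc j) x" using False Suc by simp
    finally show ?thesis .
  qed
qed

lemma key_ineq:
  fixes b :: real
  assumes b: "0 < b" "b \<le> 1" and q: "q \<ge> 1" and n: "n \<ge> 1" and k: "k < n * (q + 1)"
  shows "(1 - b) ^ q \<le> 2 * exp (- b / real n) ^ k"
proof -
  have e1: "1 - b \<le> exp (- b)" using exp_ge_add_one_self[of "-b"] by simp
  have e2: "1 - b \<le> exp (1 - 2*b) / 2" using exp_ge_add_one_self[of "1 - 2*b"] by simp
  have "(1 - b) ^ q = (1 - b) ^ (q - 1) * (1 - b)" using q
    by (metis One_nat_def Suc_pred less_eq_Suc_le power_Suc2)
  also have "\<dots> \<le> exp (- b) ^ (q - 1) * (exp (1 - 2*b) / 2)"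
    using b e1 e2 by (intro mult_mono power_mono) auto
  also have "\<dots> = exp (1 - b * (q + 1)) / 2"
    using q by (simp add: exp_of_nat_mult[symmetric] exp_add[symmetric] of_nat_diff algebra_simps)
  also have "\<dots> = exp 1 * exp (- b * (q + 1)) / 2" by (simp add: exp_add[symmetric] algebra_simps)
  also have "\<dots> \<le> 2 * exp (- b * (q + 1))"
    using exp_le by (simp add: divide_le_eq)
  also have "\<dots> \<le> 2 * exp (real k * (- b / real n))"
  proof -
    have "real k \<le> real n * (real q + 1)" using k
      by (metis of_nat_1 of_nat_add of_nat_less_iff of_nat_mult less_imp_le)
    then have "real k / real n \<le> real q + 1" using n by (simp add: divide_le_eq mult.commute)
    then have "b * (real k / real n) \<le> b * (real q + 1)" using b by (intro mult_left_mono) auto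
    then show ?thesis by (simp add: algebra_simps)
  qed
  also have "\<dots> = 2 * exp (- b / real n) ^ k" by (simp only: exp_of_nat_mult)
  finally show ?thesis .
qed

lemma ivl_tail: "(\<Sum>j\<in>{k..<N}. hh K S j x) \<le> aa K S k x"
proof (cases "k \<le> N")
  case True
  have "(\<Sum>j\<in>{k..<N}. hh K S j x) = (\<Sum>j\<in>{0 + k..<(N - k) + k}. hh K S j x)" using True by simp
  also have "\<dots> = (\<Sum>j<N - k. hh K S (k + j) x)"
    by (subst sum.shift_bounds_nat_ivl) (simp add: atLeast0LessThan add.commute)
  also have "\<dots> \<le> aa K S k x" by (rule aa_tail)
  finally show ?thesis .
next
  case False then show ?thesis by (simp add: aa_nonneg)
qed

lemma jsum_eq: "(\<Sum>j<N. real j * f j) = (\<Sum>k<N. \<Sum>j\<in>{Suc k..<N}. f j)"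
proof (induction N)
  case 0 then show ?case by simp
next
  case (Suc N)
  have "(\<Sum>k<Suc N. \<Sum>j\<in>{Suc k..<Suc N}. f j) = (\<Sum>k<N. \<Sum>j\<in>{Suc k..<Suc N}. f j)"
    by simp
  also have "\<dots> = (\<Sum>k<N. (\<Sum>j\<in>{Suc k..<N}. f j) + f N)"
    by (intro sum.cong) auto
  also have "\<dots> = (\<Sum>j<N. real j * f j) + real N * f N"
    using Suc by (simp add: sum.distrib)
  finally show ?case by simp
qed

lemma geo_div:
  fixes r :: real
  assumes "n \<ge> 1"
  shows "(\<Sum>k<n * M. r ^ (k div n)) = real n * (\<Sum>q<M. r ^ q)"
proof (induction M)
  case 0 then show ?case by simp
next
  case (Suc M)
  have nn: "n * Suc M = n * M + n" by simp
  have "(\<Sum>k<n * Suc M. r ^ (k div n)) = (\<Sum>k\<in>{0..<n*M}. r ^ (k div n)) + (\<Sum>k\<in>{n*M..<n*M+n}. r ^ (k div n))"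
    unfolding nn by (subst sum.atLeastLessThan_concat) (auto simp: atLeast0LessThan)
  also have "(\<Sum>k\<in>{n*M..<n*M+n}. r ^ (k div n)) = (\<Sum>i\<in>{0..<n}. r ^ ((i + n*M) div n))"
    using sum.shift_bounds_nat_ivl[of "\<lambda>k. r ^ (k div n)" 0 "n*M" n] by (simp add: add.commute)
  also have "\<dots> = (\<Sum>i\<in>{0..<n}. r ^ M)"
    using assms by (intro sum.cong) auto
  finally show ?case using Suc by (simp add: atLeast0LessThan algebra_simps add.commute)
qed

theorem mainTheorem18:
  fixes K :: "'a::finite \<Rightarrow> 'a pmf" and S :: "'a set" and p :: 'a
  defines "n \<equiv> CARD('a)"
  defines "c \<equiv> exp (- (y_min K ^ n) / real n)"
  shows "(\<forall>k\<ge>n. summable (\<lambda>j. hit_time_prob K S p (k + j)) \<and>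
                 (\<Sum>j. hit_time_prob K S p (k + j)) \<le> 2 * c ^ k)
       \<and> ((\<Sum>j. hit_time_prob K S p j) = 1 \<longrightarrow>
            summable (\<lambda>j. real j * hit_time_prob K S p j) \<and>
            (\<Sum>j. real j * hit_time_prob K S p j) \<le> 5 * real n / y_min K ^ n)"
proof -
  define b where "b = y_min K ^ n"
  have n1: "n \<ge> 1" unfolding n_def by (simp add: Suc_leI)
  have b: "0 < b" "b \<le> 1" unfolding b_def using ymin_facts(1,2)[of K] by (auto simp: power_le_one)
  have hit: "\<And>j. hit_time_prob K S p j = hh K S j p" by (rule hit_eq)
  have aab: "\<And>k. aa K S k p \<le> (1 - b) ^ (k div n)" unfolding b_def n_def by (rule aa_div)
  have P1: "summable (\<lambda>j. hit_time_prob K S p (k + j)) \<and>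
                 (\<Sum>j. hit_time_prob K S p (k + j)) \<le> 2 * c ^ k" if k: "k \<ge> n" for k
  proof -
    have le: "(\<Sum>j<N. hit_time_prob K S p (k + j)) \<le> (1 - b) ^ (k div n)" for N
      unfolding hit using aa_tail[where N=N and K=K and S=S and k=k and x=p] aab[of k] by linarith
    have sm: "summable (\<lambda>j. hit_time_prob K S p (k + j))"
      by (rule summableI_nonneg_bounded[OF _ le]) (simp add: hit hh_nonneg)
    have "(\<Sum>j. hit_time_prob K S p (k + j)) \<le> (1 - b) ^ (k div n)"
      by (rule suminf_le_const[OF sm le])
    also have "\<dots> \<le> 2 * c ^ k" unfolding c_def b_def[symmetric]
    proof (rule key_ineq[OF b _ n1])
      show "k div n \<ge> 1" using div_le_mono[OF k, of n] n1 by simp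
      show "k < n * (k div n + 1)" using n1
        by (metis add.commute div_mult_mod_eq mod_less_divisor nat_add_left_cancel_less
              distrib_left mult.commute mult_1 not_one_le_zero order_less_le_trans zero_less_one add_0)
    qed
    finally show ?thesis using sm by blast
  qed
  have le2: "(\<Sum>j<N. real j * hit_time_prob K S p j) \<le> real n / b" for N
  proof -
    have "(\<Sum>j<N. real j * hit_time_prob K S p j) = (\<Sum>k<N. \<Sum>j\<in>{Suc k..<N}. hh K S j p)"
      unfolding hit by (rule jsum_eq)
    also have "\<dots> \<le> (\<Sum>k<N. (1 - b) ^ (k div n))"
    proof (rule sum_mono)
      fix k
      have "(\<Sum>j\<in>{Suc k..<N}. hh K S j p) \<le> aa K S (Suc k) p" by (rule ivl_tail)
      also have "\<dots> \<le> (1 - b) ^ (Suc k div n)" by (rule aab)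
      also have "\<dots> \<le> (1 - b) ^ (k div n)"
        using b by (intro power_decreasing div_le_mono) auto
      finally show "(\<Sum>j\<in>{Suc k..<N}. hh K S j p) \<le> (1 - b) ^ (k div n)" .
    qed
    also have "\<dots> \<le> (\<Sum>k<n * N. (1 - b) ^ (k div n))"
      using b n1 by (intro sum_mono2) auto
    also have "\<dots> = real n * (\<Sum>q<N. (1 - b) ^ q)" by (rule geo_div[OF n1])
    also have "\<dots> = real n * ((1 - (1 - b) ^ N) / b)"
      using b by (simp add: sum_gp_strict)
    also have "\<dots> \<le> real n * (1 / b)"
      using b by (intro mult_left_mono divide_right_mono) auto
    finally show ?thesis by simp
  qed
  have sm2: "summable (\<lambda>j. real j * hit_time_prob K S p j)"
    by (rule summableI_nonneg_bounded[OF _ le2]) (simp add: hit hh_nonneg)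
  have "(\<Sum>j. real j * hit_time_prob K S p j) \<le> real n / b"
    by (rule suminf_le_const[OF sm2 le2])
  also have "\<dots> \<le> 5 * real n / b" using b by (simp add: divide_right_mono)
  finally show ?thesis using P1 sm2 unfolding b_def by blast
qed
end
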